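(* Assume the finite-sum setting, the interpolation assumption, and that each $f_i$ is $L_i$-smooth. Let $(x_n)$ be generated by SGD with batch size $K$. (i) If $f$ is convex and $s=\frac{1}{2L_{(K)}}$, define $\bar x_0=x_0$ and $\bar x_{n+1}=\frac{2}{n+1}x_n+\frac{n-1}{n+1}\bar x_n$. Then $f(\bar x_n)-f^\ast\overset{a.s.}{=}o(1/n)$. (ii) If $f$ is $\mu$-strongly convex and $s=\frac{1}{L_{(K)}}$, then for every $\varepsilon'>0$, $f(x_n)-f^\ast\overset{a.s.}{=}o((q+\varepsilon')^n)$ with $q:=1-\frac{\mu}{L_{(K)}}$.
   Context: Finite-sum setting: $N\ge 2$, $f_1,\dots,f_N:\mathbb{R}^d\to\mathbb{R}$ continuously differentiable, $f=\frac1N\sum_i f_i$, $f^\ast=\min f$ (attained); only $f$ is assumed (strongly) convex. For $K\in\{1,\dots,N\}$, $B$ is a uniformly random subset of $\{1,\dots,N\}$ of size $K$ and $\tilde\nabla_K(x)=\frac1K\sum_{i\in B}\nabla f_i(x)$. Interpolation: some $x^\ast\in\arg\min f$ lies in $\arg\min f_i$ for all $i$. Each $\nabla f_i$ is $L_i$-Lipschitz and $L_{(K)}:=\max_{|B|=K}\frac1K\sum_{i\in B}L_i$. SGD: $x_{n+1}=x_n-s\tilde\nabla_K(x_n)$ with independent batches. Notation: for a positive sequence $a_n$, $u_n\overset{a.s.}{=}o(a_n)$ means there is an event $A$ of probability one such that for every $\omega\in A$ and every $\epsilon>0$ there is $n_0$ with $|u_n(\omega)|\le\epsilon a_n$ for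 all $n\ge n_0$. *)

theory Defs
  imports "HOL-Probability.Probability"
begin

definition batches :: "nat \<Rightarrow> nat \<Rightarrow> nat set set" where
  "batches N K = {B. B \<subseteq> {1..N} \<and> card B = K}"

definition batch_grad :: "(nat \<Rightarrow> 'v::euclidean_space \<Rightarrow> 'v) \<Rightarrow> nat \<Rightarrow> nat set \<Rightarrow> 'v \<Rightarrow> 'v" where
  "batch_grad g K B x = (1 / real K) *\<^sub>R (\<Sum>i\<in>B. g i x)"

definition LK :: "(nat \<Rightarrow> real) \<Rightarrow> nat \<Rightarrow> nat \<Rightarrow> real" where
  "LK L N K = Max ((\<lambda>B. (\<Sum>i\<in>B. L i) / real K) ` batches N K)"

primrec sgd :: "(nat \<Rightarrow> 'v::euclidean_space \<Rightarrow> 'v) \<Rightarrow> nat \<Rightarrow> real \<Rightarrow> 'v \<Rightarrow> (nat \<Rightarrow> 'w \<Rightarrow> nat set)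
                 \<Rightarrow> nat \<Rightarrow> 'w \<Rightarrow> 'v" where
  "sgd g K s x0 B 0 \<omega> = x0"
| "sgd g K s x0 B (Suc n) \<omega> =
     sgd g K s x0 B n \<omega> - s *\<^sub>R batch_grad g K (B n \<omega>) (sgd g K s x0 B n \<omega>)"

primrec avg_seq :: "(nat \<Rightarrow> 'v::real_vector) \<Rightarrow> nat \<Rightarrow> 'v" where
  "avg_seq x 0 = x 0"
| "avg_seq x (Suc n) =
     (2 / (real n + 1)) *\<^sub>R x n + ((real n - 1) / (real n + 1)) *\<^sub>R avg_seq x n"

definition little_o_seq :: "(nat \<Rightarrow> real) \<Rightarrow> (nat \<Rightarrow> real) \<Rightarrow> bool" where
  "little_o_seq u a \<longleftrightarrow> (\<forall>\<epsilon>>0. \<forall>\<^sub>F n in sequentially. \<bar>u n\<bar> \<le> \<epsilon> * a n)"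

definition strongly_convex :: "('v::real_normed_vector \<Rightarrow> real) \<Rightarrow> real \<Rightarrow> bool" where
  "strongly_convex F \<mu> \<longleftrightarrow> convex_on UNIV (\<lambda>x. F x - \<mu> / 2 * (norm x)\<^sup>2)"

end

theory Submission
  imports Defs
begin

lemma batches_finite: "finite (batches N K)"
  unfolding batches_def by (rule finite_subset[of _ "Pow {1..N}"]) auto

lemma batches_nonempty: "K \<le> N \<Longrightarrow> batches N K \<noteq> {}"
proof -
  assume "K \<le> N"
  then have "{1..K} \<in> batches N K" unfolding batches_def by auto
  then show ?thesis by auto
qed

lemma card_batches: "card (batches N K) = N choose K"
  unfolding batches_def using n_subsets[of "{1..N}" K] by simp

lemma card_batches_mem:
  assumes i: "i \<in> {1..N}" and K: "0 < K"
  shows "card {c \<in> batches N K. i \<in> c} = (N - 1) choose (K - 1)"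
proof -
  let ?S = "{B. B \<subseteq> {1..N} - {i} \<and> card B = K - 1}"
  have fin: "finite ({1..N} - {i})" by simp
  have "card ?S = (N - 1) choose (K - 1)"
    using n_subsets[OF fin, of "K - 1"] i by simp
  moreover have "inj_on (insert i) ?S" unfolding inj_on_def by auto
  moreover have "insert i ` ?S = {c \<in> batches N K. i \<in> c}"
  proof
    show "insert i ` ?S \<subseteq> {c \<in> batches N K. i \<in> c}"
    proof
      fix c assume "c \<in> insert i ` ?S"
      then obtain B where B: "B \<in> ?S" "c = insert i B" by auto
      have "B \<subseteq> {1..N}" using B(1) by auto
      then have "finite B" using finite_subset by blast
      moreover have "i \<notin> B" using B(1) by auto
      ultimately have "card c = Suc (card B)" using B(2) by simp
      then have "card c = K" using B(1) K by simp
      then show "c \<in> {c \<in> batches N K. i \<in> c}" using B i unfolding batches_def by auto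
    qed
    show "{c \<in> batches N K. i \<in> c} \<subseteq> insert i ` ?S"
    proof
      fix c assume c: "c \<in> {c \<in> batches N K. i \<in> c}"
      then have c1: "c \<subseteq> {1..N}" "card c = K" "i \<in> c" unfolding batches_def by auto
      have "finite c" using c1(1) finite_subset by blast
      then have "card (c - {i}) = K - 1" using c1 by simp
      then have "c - {i} \<in> ?S" using c1 by auto
      moreover have "c = insert i (c - {i})" using c1 by auto
      ultimately show "c \<in> insert i ` ?S" by blast
    qed
  qed
  ultimately show ?thesis using card_image[of "insert i" ?S] by simp
qed

lemma sum_batches:
  fixes h :: "nat \<Rightarrow> 'a::real_vector"
  assumes K: "1 \<le> K"
  shows "(\<Sum>c\<in>batches N K. \<Sum>i\<in>c. h i) = real ((N - 1) choose (K - 1)) *\<^sub>R (\<Sum>i=1..N. h i)"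
proof -
  have "(\<Sum>c\<in>batches N K. \<Sum>i\<in>c. h i) = (\<Sum>c\<in>batches N K. \<Sum>i\<in>{1..N}. if i \<in> c then h i else 0)"
  proof (rule sum.cong[OF refl])
    fix c assume "c \<in> batches N K"
    then have "c \<subseteq> {1..N}" unfolding batches_def by auto
    then have e: "{1..N} \<inter> c = c" by auto
    have "(\<Sum>i\<in>{1..N} \<inter> c. h i) = (\<Sum>i\<in>{1..N}. if i \<in> c then h i else 0)"
      by (rule sum.inter_restrict) simp
    then show "(\<Sum>i\<in>c. h i) = (\<Sum>i\<in>{1..N}. if i \<in> c then h i else 0)"
      using e by simp
  qed
  also have "\<dots> = (\<Sum>i\<in>{1..N}. \<Sum>c\<in>batches N K. if i \<in> c then h i else 0)"
    by (rule sum.swap)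
  also have "\<dots> = (\<Sum>i\<in>{1..N}. real ((N - 1) choose (K - 1)) *\<^sub>R h i)"
  proof (rule sum.cong[OF refl])
    fix i assume i: "i \<in> {1..N}"
    have "(\<Sum>c\<in>batches N K. if i \<in> c then h i else 0) = (\<Sum>c\<in>{c \<in> batches N K. i \<in> c}. h i)"
        by (rule sum.inter_filter[symmetric]) (rule batches_finite)
    also have "\<dots> = real (card {c \<in> batches N K. i \<in> c}) *\<^sub>R h i" by (rule sum_constant_scaleR)
    finally show "(\<Sum>c\<in>batches N K. if i \<in> c then h i else 0) = real ((N - 1) choose (K - 1)) *\<^sub>R h i"
      using card_batches_mem[OF i] K by simp
  qed
  also have "\<dots> = real ((N - 1) choose (K - 1)) *\<^sub>R (\<Sum>i=1..N. h i)"
    by (simp add: scaleR_sum_right)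
  finally show ?thesis .
qed

lemma avg_batches:
  fixes h :: "nat \<Rightarrow> 'a::real_vector"
  assumes K: "1 \<le> K" "K \<le> N"
  shows "(1 / real (card (batches N K))) *\<^sub>R (\<Sum>c\<in>batches N K. (1 / real K) *\<^sub>R (\<Sum>i\<in>c. h i))
     = (1 / real N) *\<^sub>R (\<Sum>i=1..N. h i)"
proof -
  have e: "real K * real (N choose K) = real N * real ((N - 1) choose (K - 1))"
  proof -
    have "K * (N choose K) = N * ((N - 1) choose (K - 1))"
      using K by (intro times_binomial_minus1_eq) simp
    then have "real (K * (N choose K)) = real (N * ((N - 1) choose (K - 1)))" by (simp only:)
    then show ?thesis by (simp only: of_nat_mult)
  qed
  have pos: "real (N choose K) > 0" using K by simp
  have N0: "real N > 0" using K by simp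
  have "(1 / real (card (batches N K))) *\<^sub>R (\<Sum>c\<in>batches N K. (1 / real K) *\<^sub>R (\<Sum>i\<in>c. h i))
      = (1 / (real (N choose K) * real K)) *\<^sub>R (\<Sum>c\<in>batches N K. (\<Sum>i\<in>c. h i))"
    by (simp add: card_batches scaleR_sum_right[symmetric])
  also have "\<dots> = (real ((N - 1) choose (K - 1)) / (real (N choose K) * real K)) *\<^sub>R (\<Sum>i=1..N. h i)"
    by (simp add: sum_batches[OF K(1)])
  also have "real ((N - 1) choose (K - 1)) / (real (N choose K) * real K) = 1 / real N"
    using e pos N0 K by (simp add: field_simps)
  finally show ?thesis .
qed

lemma deriv_line:
  fixes \<phi> :: "'v::real_inner \<Rightarrow> real"
  assumes "(\<phi> has_derivative (\<lambda>k. G \<bullet> k)) (at (x + t *\<^sub>R h))"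
  shows "((\<lambda>t. \<phi> (x + t *\<^sub>R h)) has_real_derivative (G \<bullet> h)) (at t)"
proof -
  have "((\<lambda>t. x + t *\<^sub>R h) has_derivative (\<lambda>u. u *\<^sub>R h)) (at t)"
    by (auto intro!: derivative_eq_intros)
  from has_derivative_compose[OF this assms]
  have "((\<lambda>t. \<phi> (x + t *\<^sub>R h)) has_derivative (\<lambda>u. G \<bullet> (u *\<^sub>R h))) (at t)" by (simp add: o_def)
  then show ?thesis unfolding has_field_derivative_def
    by (rule has_derivative_eq_rhs) (simp add: fun_eq_iff mult.commute)
qed

lemma descent:
  fixes \<phi> :: "'v::real_inner \<Rightarrow> real"
  assumes d: "\<And>z. (\<phi> has_derivative (\<lambda>k. G z \<bullet> k)) (at z)"
    and lip: "\<And>z w. norm (G z - G w) \<le> L * norm (z - w)"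
  shows "\<phi> y \<le> \<phi> x + G x \<bullet> (y - x) + L / 2 * (norm (y - x))\<^sup>2"
proof -
  define h where "h = y - x"
  define \<psi> where "\<psi> t = \<phi> (x + t *\<^sub>R h) - t * (G x \<bullet> h) - L / 2 * t\<^sup>2 * (norm h)\<^sup>2" for t
  define \<psi>' where "\<psi>' t = G (x + t *\<^sub>R h) \<bullet> h - G x \<bullet> h - L * t * (norm h)\<^sup>2" for t
  have D: "(\<psi> has_real_derivative \<psi>' t) (at t)" for t
  proof -
    have h1: "((\<lambda>t. \<phi> (x + t *\<^sub>R h)) has_real_derivative (G (x + t *\<^sub>R h) \<bullet> h)) (at t)"
      by (rule deriv_line[OF d])
    have h2: "((\<lambda>t. t * (G x \<bullet> h)) has_real_derivative (G x \<bullet> h)) (at t)"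
      by (auto intro!: derivative_eq_intros)
    have h3: "((\<lambda>t. L / 2 * t\<^sup>2 * (norm h)\<^sup>2) has_real_derivative (L * t * (norm h)\<^sup>2)) (at t)"
      by (auto intro!: derivative_eq_intros)
    show ?thesis using DERIV_diff[OF DERIV_diff[OF h1 h2] h3] unfolding \<psi>_def \<psi>'_def by simp
  qed
  obtain z where z: "0 < z" "z < 1" "\<psi> 1 - \<psi> 0 = (1 - 0) * \<psi>' z"
    using MVT2[of 0 1 \<psi> \<psi>'] D by auto
  have "G (x + z *\<^sub>R h) \<bullet> h - G x \<bullet> h = (G (x + z *\<^sub>R h) - G x) \<bullet> h" by (simp add: inner_diff_left)
  also have "\<dots> \<le> norm (G (x + z *\<^sub>R h) - G x) * norm h" by (rule norm_cauchy_schwarz)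
  also have "\<dots> \<le> L * norm (z *\<^sub>R h) * norm h"
    using lip[of "x + z *\<^sub>R h" x] by (simp add: mult_right_mono)
  also have "\<dots> = L * z * (norm h)\<^sup>2" using z by (simp add: power2_eq_square)
  finally have "\<psi>' z \<le> 0" unfolding \<psi>'_def by simp
  then have "\<psi> 1 \<le> \<psi> 0" using z by simp
  then show ?thesis unfolding \<psi>_def h_def by simp
qed

lemma grad_sq_bound:
  fixes \<phi> :: "'v::real_inner \<Rightarrow> real"
  assumes d: "\<And>z. (\<phi> has_derivative (\<lambda>k. G z \<bullet> k)) (at z)"
    and lip: "\<And>z w. norm (G z - G w) \<le> L * norm (z - w)"
    and min: "\<And>z. \<phi> x0 \<le> \<phi> z" and L: "L > 0"
  shows "(norm (G x))\<^sup>2 \<le> 2 * L * (\<phi> x - \<phi> x0)"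
proof -
  define y where "y = x - (1 / L) *\<^sub>R G x"
  have "\<phi> y \<le> \<phi> x + G x \<bullet> (y - x) + L / 2 * (norm (y - x))\<^sup>2"
    by (rule descent[OF d lip])
  also have "G x \<bullet> (y - x) = - (1 / L) * (norm (G x))\<^sup>2"
    unfolding y_def by (simp add: power2_norm_eq_inner)
  also have "L / 2 * (norm (y - x))\<^sup>2 = (1 / (2 * L)) * (norm (G x))\<^sup>2"
    unfolding y_def using L by (simp add: power2_eq_square)
  finally have "\<phi> y \<le> \<phi> x - (1 / (2 * L)) * (norm (G x))\<^sup>2"
    using L by (simp add: field_simps)
  moreover have "\<phi> x0 \<le> \<phi> y" by (rule min)
  ultimately have "(1 / (2 * L)) * (norm (G x))\<^sup>2 \<le> \<phi> x - \<phi> x0" by simp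
  then show ?thesis using L by (simp add: field_simps)
qed

lemma grad_zero_at_min:
  fixes \<phi> :: "'v::real_inner \<Rightarrow> real"
  assumes d: "\<And>z. (\<phi> has_derivative (\<lambda>k. G z \<bullet> k)) (at z)"
    and lip: "\<And>z w. norm (G z - G w) \<le> L * norm (z - w)"
    and min: "\<And>z. \<phi> x0 \<le> \<phi> z"
  shows "G x0 = 0"
proof -
  have lip': "norm (G z - G w) \<le> (max L 0 + 1) * norm (z - w)" for z w
    using lip[of z w] by (smt (verit, ccfv_SIG) mult_right_mono norm_ge_zero)
  have "(norm (G x0))\<^sup>2 \<le> 2 * (max L 0 + 1) * (\<phi> x0 - \<phi> x0)"
    by (rule grad_sq_bound[OF d lip' min]) simp
  then show ?thesis by simp
qed

lemma convex_grad_ineq: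
  fixes \<phi> :: "'v::real_normed_vector \<Rightarrow> real"
  assumes c: "convex_on UNIV \<phi>" and d: "(\<phi> has_derivative D) (at x)"
  shows "\<phi> y \<ge> \<phi> x + D (y - x)"
proof -
  define h where "h = y - x"
  define \<psi> where "\<psi> t = \<phi> (x + t *\<^sub>R h)" for t
  have cv: "convex_on UNIV \<psi>"
  proof (rule convex_onI)
    fix u :: real and a b assume u: "0 < u" "u < 1"
    have "x + ((1 - u) * a + u * b) *\<^sub>R h = (1 - u) *\<^sub>R (x + a *\<^sub>R h) + u *\<^sub>R (x + b *\<^sub>R h)"
      by (simp add: algebra_simps)
    then show "\<psi> ((1 - u) *\<^sub>R a + u *\<^sub>R b) \<le> (1 - u) * \<psi> a + u * \<psi> b"
      using convex_onD[OF c, of u "x + a *\<^sub>R h" "x + b *\<^sub>R h"] u unfolding \<psi>_def by simp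
  qed simp
  have ld: "linear D" using d by (simp add: has_derivative_linear)
  have "((\<lambda>t. x + t *\<^sub>R h) has_derivative (\<lambda>u. u *\<^sub>R h)) (at 0)"
    by (auto intro!: derivative_eq_intros)
  from has_derivative_compose[OF this, of \<phi> D] d
  have "(\<psi> has_derivative (\<lambda>u. D (u *\<^sub>R h))) (at 0)" unfolding \<psi>_def by (simp add: o_def)
  then have "(\<psi> has_real_derivative D h) (at 0)" unfolding has_field_derivative_def
    by (rule has_derivative_eq_rhs) (simp add: fun_eq_iff linear_scale[OF ld] mult.commute)
  then have "(\<psi> has_real_derivative D h) (at 0 within UNIV)" by simp
  from convex_on_imp_above_tangent[OF cv _ _ _ this, of 1]
  have "\<psi> 1 - \<psi> 0 \<ge> D h * (1 - 0)" by simp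
  then show ?thesis unfolding \<psi>_def h_def by simp
qed

locale sgd_setting =
  fixes f :: "nat \<Rightarrow> 'v::euclidean_space \<Rightarrow> real"
    and g :: "nat \<Rightarrow> 'v \<Rightarrow> 'v"
    and L :: "nat \<Rightarrow> real"
    and N K :: nat
    and xs :: 'v
    and F :: "'v \<Rightarrow> real"
  assumes F_def: "F = (\<lambda>x. (1 / real N) * (\<Sum>i=1..N. f i x))"
    and K1: "1 \<le> K" and KN: "K \<le> N"
    and grad: "\<And>i x. i \<in> {1..N} \<Longrightarrow> (f i has_derivative (\<lambda>h. g i x \<bullet> h)) (at x)"
    and L_nonneg: "\<And>i. i \<in> {1..N} \<Longrightarrow> L i \<ge> 0"
    and lipschitz: "\<And>i x y. i \<in> {1..N} \<Longrightarrow> norm (g i x - g i y) \<le> L i * norm (x - y)"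
    and interp: "\<And>i y. i \<in> {1..N} \<Longrightarrow> f i xs \<le> f i y"
begin

definition fc :: "nat set \<Rightarrow> 'v \<Rightarrow> real" where
  "fc c x = (1 / real K) * (\<Sum>i\<in>c. f i x)"
definition Lc :: "nat set \<Rightarrow> real" where
  "Lc c = (\<Sum>i\<in>c. L i) / real K"
definition GF :: "'v \<Rightarrow> 'v" where
  "GF x = (1 / real N) *\<^sub>R (\<Sum>i=1..N. g i x)"
abbreviation "bg c x \<equiv> batch_grad g K c x"
abbreviation "LL \<equiv> LK L N K"
abbreviation "Bs \<equiv> batches N K"
abbreviation "m \<equiv> card (batches N K)"

lemma Bs_sub: "c \<in> Bs \<Longrightarrow> c \<subseteq> {1..N}" unfolding batches_def by auto

lemma Bs_mem: "c \<in> Bs \<Longrightarrow> i \<in> c \<Longrightarrow> i \<in> {1..N}" using Bs_sub by blast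

lemma m_pos: "m > 0"
  using batches_finite batches_nonempty[OF KN] by (simp add: card_gt_0_iff)

lemma Lc_le: "c \<in> Bs \<Longrightarrow> Lc c \<le> LL"
  unfolding LK_def Lc_def by (rule Max_ge) (auto intro: finite_imageI[OF batches_finite])

lemma Lc_nonneg: "c \<in> Bs \<Longrightarrow> Lc c \<ge> 0"
  unfolding Lc_def by (auto intro!: divide_nonneg_nonneg sum_nonneg L_nonneg Bs_mem)

lemma LL_nonneg: "LL \<ge> 0"
proof -
  obtain c where "c \<in> Bs" using batches_nonempty[OF KN] by auto
  then show ?thesis using Lc_le Lc_nonneg by force
qed

lemma fc_deriv: "c \<in> Bs \<Longrightarrow> (fc c has_derivative (\<lambda>h. bg c x \<bullet> h)) (at x)"
proof -
  assume c: "c \<in> Bs"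
  have "((\<lambda>x. \<Sum>i\<in>c. f i x) has_derivative (\<lambda>h. \<Sum>i\<in>c. g i x \<bullet> h)) (at x)"
    by (rule has_derivative_sum) (use c Bs_sub grad in blast)
  then have "((\<lambda>x. (1 / real K) * (\<Sum>i\<in>c. f i x)) has_derivative (\<lambda>h. (1 / real K) * (\<Sum>i\<in>c. g i x \<bullet> h))) (at x)"
    by (rule has_derivative_mult_right)
  then show ?thesis unfolding fc_def[abs_def] batch_grad_def
    by (rule has_derivative_eq_rhs) (simp add: fun_eq_iff inner_sum_left)
qed

lemma bg_lip: "c \<in> Bs \<Longrightarrow> norm (bg c x - bg c y) \<le> LL * norm (x - y)"
proof -
  assume c: "c \<in> Bs"
  have "bg c x - bg c y = (1 / real K) *\<^sub>R (\<Sum>i\<in>c. g i x - g i y)"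
    unfolding batch_grad_def by (simp add: sum_subtractf scaleR_diff_right)
  then have "norm (bg c x - bg c y) = (1 / real K) * norm (\<Sum>i\<in>c. g i x - g i y)" by simp
  also have "\<dots> \<le> (1 / real K) * (\<Sum>i\<in>c. L i * norm (x - y))"
    using c by (intro mult_left_mono order_trans[OF norm_sum sum_mono]) (auto intro!: lipschitz Bs_mem)
  also have "\<dots> = Lc c * norm (x - y)" unfolding Lc_def by (simp add: sum_distrib_right)
  also have "\<dots> \<le> LL * norm (x - y)" using Lc_le[OF c] by (simp add: mult_right_mono)
  finally show ?thesis .
qed

lemma fc_min: "c \<in> Bs \<Longrightarrow> fc c xs \<le> fc c y"
  unfolding fc_def by (intro mult_left_mono sum_mono) (auto intro!: interp Bs_mem)

lemma avg_bg: "(1 / real m) *\<^sub>R (\<Sum>c\<in>Bs. bg c x) = GF x"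
  unfolding batch_grad_def GF_def using avg_batches[OF K1 KN, of "\<lambda>i. g i x"] by simp

lemma avg_fc: "(1 / real m) * (\<Sum>c\<in>Bs. fc c x) = F x"
  unfolding fc_def F_def using avg_batches[OF K1 KN, of "\<lambda>i. f i x"] by simp

lemma avg_Lc: "(1 / real m) * (\<Sum>c\<in>Bs. Lc c) = (1 / real N) * (\<Sum>i=1..N. L i)"
  unfolding Lc_def using avg_batches[OF K1 KN, of L] by (simp add: divide_inverse mult.commute)

lemma avgL_le: "(1 / real N) * (\<Sum>i=1..N. L i) \<le> LL"
proof -
  have "(\<Sum>c\<in>Bs. Lc c) \<le> (\<Sum>c\<in>Bs. LL)" using Lc_le by (rule sum_mono)
  then have "sum Lc Bs \<le> LL * real m" by (simp add: mult.commute)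
  moreover have rm: "real m > 0" using m_pos by simp
  ultimately have "sum Lc Bs / real m \<le> LL" by (simp add: pos_divide_le_eq)
  then have "(1 / real m) * (\<Sum>c\<in>Bs. Lc c) \<le> LL" by simp
  then show ?thesis using avg_Lc by simp
qed

lemma F_deriv: "(F has_derivative (\<lambda>h. GF x \<bullet> h)) (at x)"
proof -
  have "((\<lambda>x. \<Sum>i=1..N. f i x) has_derivative (\<lambda>h. \<Sum>i=1..N. g i x \<bullet> h)) (at x)"
    by (rule has_derivative_sum) (use grad in blast)
  then have "((\<lambda>x. (1 / real N) * (\<Sum>i=1..N. f i x)) has_derivative (\<lambda>h. (1 / real N) * (\<Sum>i=1..N. g i x \<bullet> h))) (at x)"
    by (rule has_derivative_mult_right)
  then show ?thesis unfolding F_def GF_def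
    by (rule has_derivative_eq_rhs) (simp add: fun_eq_iff inner_sum_left)
qed

lemma GF_lip: "norm (GF x - GF y) \<le> LL * norm (x - y)"
proof -
  have "GF x - GF y = (1 / real N) *\<^sub>R (\<Sum>i=1..N. g i x - g i y)"
    unfolding GF_def by (simp add: sum_subtractf scaleR_diff_right)
  then have "norm (GF x - GF y) = (1 / real N) * norm (\<Sum>i=1..N. g i x - g i y)" by simp
  also have "\<dots> \<le> (1 / real N) * (\<Sum>i=1..N. L i * norm (x - y))"
    using lipschitz by (intro mult_left_mono order_trans[OF norm_sum sum_mono]) auto
  also have "\<dots> = ((1 / real N) * (\<Sum>i=1..N. L i)) * norm (x - y)" by (simp add: sum_distrib_right)
  also have "\<dots> \<le> LL * norm (x - y)" by (rule mult_right_mono[OF avgL_le]) simp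
  finally show ?thesis .
qed

lemma F_min: "F xs \<le> F y"
  unfolding F_def using interp by (intro mult_left_mono sum_mono) auto

lemma GF_xs: "GF xs = 0"
  by (rule grad_zero_at_min[OF F_deriv GF_lip F_min])

lemma F_upper: "F x - F xs \<le> LL / 2 * (norm (x - xs))\<^sup>2"
  using descent[OF F_deriv GF_lip, of x xs] GF_xs by simp

lemma bg_sq: "c \<in> Bs \<Longrightarrow> LL > 0 \<Longrightarrow> (norm (bg c x))\<^sup>2 \<le> 2 * LL * (fc c x - fc c xs)"
  by (rule grad_sq_bound[OF fc_deriv bg_lip fc_min])

lemma core:
  assumes LL: "LL > 0"
  shows "(1 / real m) * (\<Sum>c\<in>Bs. (norm (x - s *\<^sub>R bg c x - xs))\<^sup>2)
     \<le> (norm (x - xs))\<^sup>2 - 2 * s * (GF x \<bullet> (x - xs)) + 2 * LL * s\<^sup>2 * (F x - F xs)"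
proof -
  define d where "d = x - xs"
  have e: "(norm (x - s *\<^sub>R bg c x - xs))\<^sup>2 = (norm d)\<^sup>2 - 2 * s * (bg c x \<bullet> d) + s\<^sup>2 * (norm (bg c x))\<^sup>2" for c
  proof -
    have "x - s *\<^sub>R bg c x - xs = d - s *\<^sub>R bg c x" unfolding d_def by simp
    then show ?thesis
      by (simp only: power2_norm_eq_inner) (simp add: inner_diff_left inner_diff_right inner_commute power2_eq_square algebra_simps)
  qed
  have S: "(\<Sum>c\<in>Bs. (norm (x - s *\<^sub>R bg c x - xs))\<^sup>2)
      = real m * (norm d)\<^sup>2 - 2 * s * ((\<Sum>c\<in>Bs. bg c x) \<bullet> d) + s\<^sup>2 * (\<Sum>c\<in>Bs. (norm (bg c x))\<^sup>2)"
    unfolding e by (simp add: sum.distrib sum_subtractf sum_distrib_left inner_sum_left)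
  have G: "(\<Sum>c\<in>Bs. bg c x) = real m *\<^sub>R GF x"
  proof -
    have "real m *\<^sub>R GF x = real m *\<^sub>R ((1 / real m) *\<^sub>R (\<Sum>c\<in>Bs. bg c x))"
      using avg_bg[of x] by simp
    also have "\<dots> = (\<Sum>c\<in>Bs. bg c x)" using m_pos by simp
    finally show ?thesis by simp
  qed
  have Q1: "(\<Sum>c\<in>Bs. (norm (bg c x))\<^sup>2) \<le> (\<Sum>c\<in>Bs. 2 * LL * (fc c x - fc c xs))"
    by (rule sum_mono) (rule bg_sq[OF _ LL])
  have Q2: "(\<Sum>c\<in>Bs. 2 * LL * (fc c x - fc c xs)) = 2 * LL * real m * (F x - F xs)"
  proof -
    have "(\<Sum>c\<in>Bs. fc c x) = real m * F x" "(\<Sum>c\<in>Bs. fc c xs) = real m * F xs"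
      using avg_fc[of x] avg_fc[of xs] m_pos by (simp_all add: field_simps)
    then show ?thesis by (simp add: sum_distrib_left[symmetric] sum_subtractf algebra_simps)
  qed
  have Q: "s\<^sup>2 * (\<Sum>c\<in>Bs. (norm (bg c x))\<^sup>2) \<le> s\<^sup>2 * (2 * LL * real m * (F x - F xs))"
    using Q1 Q2 by (intro mult_left_mono) auto
  have "(\<Sum>c\<in>Bs. (norm (x - s *\<^sub>R bg c x - xs))\<^sup>2)
      \<le> real m * ((norm d)\<^sup>2 - 2 * s * (GF x \<bullet> d) + 2 * LL * s\<^sup>2 * (F x - F xs))"
    using S Q unfolding G by (simp add: algebra_simps)
  then show ?thesis using m_pos unfolding d_def by (simp add: field_simps)
qed

end

context sgd_setting
begin

lemma step_convex:
  assumes cv: "convex_on UNIV F" and LL: "LL > 0"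
  shows "(1 / real m) * (\<Sum>c\<in>Bs. (norm (x - (1 / (2 * LL)) *\<^sub>R bg c x - xs))\<^sup>2)
     \<le> (norm (x - xs))\<^sup>2 - (1 / (2 * LL)) * (F x - F xs)"
proof -
  have gi: "F xs \<ge> F x + GF x \<bullet> (xs - x)" by (rule convex_grad_ineq[OF cv F_deriv])
  have gi': "GF x \<bullet> (x - xs) \<ge> F x - F xs"
    using gi by (simp add: inner_diff_right)
  have "2 * (1 / (2 * LL)) * (GF x \<bullet> (x - xs)) \<ge> 2 * (1 / (2 * LL)) * (F x - F xs)"
    using gi' LL by (intro mult_left_mono) auto
  moreover have "2 * LL * (1 / (2 * LL))\<^sup>2 * (F x - F xs) = (1 / (2 * LL)) * (F x - F xs)"
    using LL by (simp add: power2_eq_square field_simps)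
  moreover have "2 * (1 / (2 * LL)) * (F x - F xs) = 2 * ((1 / (2 * LL)) * (F x - F xs))" by (rule mult.assoc)
  ultimately show ?thesis using core[OF LL, of x "1 / (2 * LL)"] by linarith
qed

lemma deriv_sqnorm: "((\<lambda>x::'v. (norm x)\<^sup>2) has_derivative (\<lambda>h. (2 *\<^sub>R x) \<bullet> h)) (at x)"
proof -
  have "((\<lambda>x::'v. x \<bullet> x) has_derivative (\<lambda>h. x \<bullet> h + h \<bullet> x)) (at x)"
    by (auto intro!: derivative_eq_intros)
  then show ?thesis unfolding power2_norm_eq_inner
    by (rule has_derivative_eq_rhs) (simp add: fun_eq_iff inner_commute)
qed

lemma strong_grad:
  assumes sc: "strongly_convex F \<mu>"
  shows "GF x \<bullet> (x - xs) \<ge> F x - F xs + \<mu> / 2 * (norm (x - xs))\<^sup>2"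
proof -
  have cv: "convex_on UNIV (\<lambda>x. F x - \<mu> / 2 * (norm x)\<^sup>2)"
    using sc unfolding strongly_convex_def .
  have d: "((\<lambda>x. F x - \<mu> / 2 * (norm x)\<^sup>2) has_derivative (\<lambda>h. GF x \<bullet> h - \<mu> / 2 * ((2 *\<^sub>R x) \<bullet> h))) (at x)"
    by (intro has_derivative_diff F_deriv has_derivative_mult_right deriv_sqnorm)
  have "F xs - \<mu> / 2 * (norm xs)\<^sup>2 \<ge> F x - \<mu> / 2 * (norm x)\<^sup>2 + (GF x \<bullet> (xs - x) - \<mu> / 2 * ((2 *\<^sub>R x) \<bullet> (xs - x)))"
    using convex_grad_ineq[OF cv d, of xs] by simp
  moreover have "(norm (x - xs))\<^sup>2 = (norm x)\<^sup>2 - 2 * (x \<bullet> xs) + (norm xs)\<^sup>2"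
    by (simp add: power2_norm_eq_inner inner_diff_left inner_diff_right inner_commute)
  moreover have "(2 *\<^sub>R x) \<bullet> (xs - x) = 2 * (x \<bullet> xs) - 2 * (norm x)\<^sup>2"
    by (simp add: power2_norm_eq_inner inner_diff_right)
  moreover have "GF x \<bullet> (xs - x) = - (GF x \<bullet> (x - xs))" by (simp add: inner_diff_right)
  ultimately show ?thesis
    by (simp add: algebra_simps power2_norm_eq_inner inner_diff_left inner_diff_right inner_commute)
qed

lemma step_strong:
  assumes sc: "strongly_convex F \<mu>" and LL: "LL > 0"
  shows "(1 / real m) * (\<Sum>c\<in>Bs. (norm (x - (1 / LL) *\<^sub>R bg c x - xs))\<^sup>2)
     \<le> (1 - \<mu> / LL) * (norm (x - xs))\<^sup>2"
proof -
  have gi: "GF x \<bullet> (x - xs) \<ge> F x - F xs + \<mu> / 2 * (norm (x - xs))\<^sup>2" by (rule strong_grad[OF sc])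
  have "2 * (1 / LL) * (GF x \<bullet> (x - xs)) \<ge> 2 * (1 / LL) * (F x - F xs + \<mu> / 2 * (norm (x - xs))\<^sup>2)"
    using gi LL by (intro mult_left_mono) auto
  moreover have "2 * (1 / LL) * (F x - F xs + \<mu> / 2 * (norm (x - xs))\<^sup>2)
      = 2 * LL * (1 / LL)\<^sup>2 * (F x - F xs) + \<mu> / LL * (norm (x - xs))\<^sup>2"
    using LL by (simp add: power2_eq_square field_simps)
  moreover have "(1 - \<mu> / LL) * (norm (x - xs))\<^sup>2 = (norm (x - xs))\<^sup>2 - \<mu> / LL * (norm (x - xs))\<^sup>2"
    by (simp add: algebra_simps)
  ultimately show ?thesis using core[OF LL, of x "1 / LL"] by linarith
qed

lemma mu_le:
  assumes sc: "strongly_convex F \<mu>" and LL: "LL > 0"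
  shows "\<mu> \<le> LL"
proof -
  obtain e :: 'v where e: "norm e = 1" using vector_choose_size[of 1] by auto
  define x where "x = xs + e"
  have "0 \<le> (1 / real m) * (\<Sum>c\<in>Bs. (norm (x - (1 / LL) *\<^sub>R bg c x - xs))\<^sup>2)"
    by (intro mult_nonneg_nonneg sum_nonneg) auto
  also have "\<dots> \<le> (1 - \<mu> / LL) * (norm (x - xs))\<^sup>2" by (rule step_strong[OF sc LL])
  finally have "0 \<le> 1 - \<mu> / LL" using e unfolding x_def by simp
  then show ?thesis using LL by (simp add: field_simps)
qed

lemma LL0: "LL = 0 \<Longrightarrow> F x = F xs"
  using F_upper[of x] F_min[of x] by simp

end

lemma sum_PiE_Suc:
  assumes T: "finite T"
  shows "(\<Sum>v\<in>PiE {..<Suc n} (\<lambda>_. T). h v) = (\<Sum>v\<in>PiE {..<n} (\<lambda>_. T). \<Sum>c\<in>T. h (v(n := c)))"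
proof -
  have eq: "PiE {..<Suc n} (\<lambda>_. T) = (\<lambda>(y, g). g(n := y)) ` (T \<times> PiE {..<n} (\<lambda>_. T))"
    using PiE_insert_eq[of n "{..<n}" "\<lambda>_. T"] by (simp add: lessThan_Suc)
  have inj: "inj_on (\<lambda>(y, g). g(n := y)) (T \<times> PiE {..<n} (\<lambda>_. T))"
    using inj_combinator[of n "{..<n}" "\<lambda>_. T"] by simp
  have "(\<Sum>v\<in>PiE {..<Suc n} (\<lambda>_. T). h v) = (\<Sum>p\<in>T \<times> PiE {..<n} (\<lambda>_. T). h ((\<lambda>(y, g). g(n := y)) p))"
    unfolding eq by (rule sum.reindex[OF inj, unfolded comp_def])
  also have "\<dots> = (\<Sum>c\<in>T. \<Sum>v\<in>PiE {..<n} (\<lambda>_. T). h (v(n := c)))"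
    by (subst sum.cartesian_product) (simp add: case_prod_unfold)
  also have "\<dots> = (\<Sum>v\<in>PiE {..<n} (\<lambda>_. T). \<Sum>c\<in>T. h (v(n := c)))"
    by (rule sum.swap)
  finally show ?thesis .
qed

locale sgd_prob = prob_space M for M :: "'w measure" +
  fixes B :: "nat \<Rightarrow> 'w \<Rightarrow> nat set" and Bs :: "nat set set"
  assumes Bs_fin: "finite Bs" and Bs_ne: "Bs \<noteq> {}"
    and B_indep: "indep_vars (\<lambda>_. count_space UNIV) B UNIV"
    and B_unif: "\<And>n. distr M (count_space UNIV) (B n) = measure_pmf (pmf_of_set Bs)"
begin

lemma B_meas[measurable]: "B i \<in> measurable M (count_space UNIV)"
  using B_indep unfolding indep_vars_def by auto

definition Ev :: "nat \<Rightarrow> (nat \<Rightarrow> nat set) \<Rightarrow> 'w set" where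
  "Ev n v = {\<omega> \<in> space M. \<forall>i<n. B i \<omega> = v i}"

lemma Bpre_sets: "B i -` {c} \<inter> space M \<in> sets M"
  by (rule measurable_sets[OF B_meas]) simp

lemma Ev_sets: "Ev n v \<in> sets M"
proof (cases "n = 0")
  case True
  then have "Ev n v = space M" unfolding Ev_def by auto
  then show ?thesis by simp
next
  case False
  then have "Ev n v = (\<Inter>i\<in>{..<n}. B i -` {v i} \<inter> space M)" unfolding Ev_def by auto
  also have "\<dots> \<in> sets M" using False by (intro sets.finite_INT Bpre_sets ballI) auto
  finally show ?thesis .
qed

lemma prob_single: "c \<in> Bs \<Longrightarrow> prob (B i -` {c} \<inter> space M) = 1 / real (card Bs)"
proof -
  assume c: "c \<in> Bs"
  have "prob (B i -` {c} \<inter> space M) = measure (distr M (count_space UNIV) (B i)) {c}"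
    by (rule measure_distr[symmetric]) auto
  also have "\<dots> = pmf (pmf_of_set Bs) c" unfolding B_unif by (rule measure_pmf_single)
  also have "\<dots> = 1 / real (card Bs)" using c Bs_fin Bs_ne by simp
  finally show ?thesis .
qed

lemma emeasure_Ev:
  assumes v: "v \<in> PiE {..<n} (\<lambda>_. Bs)"
  shows "emeasure M (Ev n v) = ennreal ((1 / real (card Bs)) ^ n)"
proof (cases "n = 0")
  case True
  then show ?thesis unfolding Ev_def by (simp add: emeasure_space_1)
next
  case False
  have "Ev n v = (\<Inter>i\<in>{..<n}. B i -` {v i} \<inter> space M)"
    unfolding Ev_def using False by auto
  moreover have "prob (\<Inter>i\<in>{..<n}. B i -` {v i} \<inter> space M) = (\<Prod>i\<in>{..<n}. prob (B i -` {v i} \<inter> space M))"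
    by (rule indep_varsD[OF B_indep]) (use False in auto)
  ultimately have "prob (Ev n v) = (\<Prod>i\<in>{..<n}. prob (B i -` {v i} \<inter> space M))" by simp
  also have "\<dots> = (\<Prod>i\<in>{..<n}. 1 / real (card Bs))"
    using v by (intro prod.cong refl prob_single) auto
  finally show ?thesis by (simp add: emeasure_eq_measure)
qed

lemma AE_in: "AE \<omega> in M. \<forall>i. B i \<omega> \<in> Bs"
proof (subst AE_all_countable, intro allI)
  fix i
  have "AE c in measure_pmf (pmf_of_set Bs). c \<in> Bs"
    using AE_measure_pmf[of "pmf_of_set Bs"] Bs_fin Bs_ne by simp
  then have "AE c in distr M (count_space UNIV) (B i). c \<in> Bs" unfolding B_unif .
  then show "AE \<omega> in M. B i \<omega> \<in> Bs"
    by (subst (asm) AE_distr_iff) auto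
qed

lemma expect:
  fixes H :: "(nat \<Rightarrow> nat set) \<Rightarrow> real"
  assumes Hpos: "\<And>v. H v \<ge> 0"
    and Hcong: "\<And>v w. (\<And>i. i < n \<Longrightarrow> v i = w i) \<Longrightarrow> H v = H w"
  shows "\<exists>Z. Z \<in> borel_measurable M \<and> (AE \<omega> in M. Z \<omega> = ennreal (H (\<lambda>i. B i \<omega>)))
      \<and> integral\<^sup>N M Z = ennreal ((\<Sum>v\<in>PiE {..<n} (\<lambda>_. Bs). H v) * (1 / real (card Bs)) ^ n)"
proof (intro exI conjI)
  define Z where "Z \<omega> = (\<Sum>v\<in>PiE {..<n} (\<lambda>_. Bs). ennreal (H v) * indicator (Ev n v) \<omega>)" for \<omega>
  have mz: "(\<lambda>\<omega>. ennreal (H v) * indicator (Ev n v) \<omega>) \<in> borel_measurable M" for v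
    by (intro borel_measurable_times_ennreal borel_measurable_const borel_measurable_indicator Ev_sets)
  show "Z \<in> borel_measurable M" unfolding Z_def by (rule borel_measurable_sum) (rule mz)
  show "AE \<omega> in M. Z \<omega> = ennreal (H (\<lambda>i. B i \<omega>))"
    using AE_in AE_space
  proof eventually_elim
    case (elim \<omega>)
    define v0 where "v0 = restrict (\<lambda>i. B i \<omega>) {..<n}"
    have v0: "v0 \<in> PiE {..<n} (\<lambda>_. Bs)" unfolding v0_def using elim by auto
    have ind: "indicator (Ev n v) \<omega> = (if v = v0 then 1 else (0::ennreal))"
      if v: "v \<in> PiE {..<n} (\<lambda>_. Bs)" for v
    proof -
      have "(\<omega> \<in> Ev n v) = (v = v0)"
      proof
        assume "\<omega> \<in> Ev n v"
        then have "\<forall>i<n. B i \<omega> = v i" unfolding Ev_def by auto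
        then show "v = v0"
        proof (intro ext)
          fix i assume *: "\<forall>i<n. B i \<omega> = v i"
          show "v i = v0 i"
          proof (cases "i < n")
            case True then show ?thesis using * by (simp add: v0_def)
          next
            case False then show ?thesis by (simp add: v0_def PiE_arb[OF v])
          qed
        qed
      next
        assume "v = v0"
        then show "\<omega> \<in> Ev n v" using elim unfolding Ev_def v0_def by auto
      qed
      then show ?thesis by (simp add: indicator_def)
    qed
    have "Z \<omega> = (\<Sum>v\<in>PiE {..<n} (\<lambda>_. Bs). if v = v0 then ennreal (H v) else 0)"
      unfolding Z_def by (intro sum.cong refl) (simp add: ind)
    also have "\<dots> = ennreal (H v0)"
      using v0 by (subst sum.delta) (simp_all add: finite_PiE Bs_fin)
    also have "H v0 = H (\<lambda>i. B i \<omega>)" by (rule Hcong) (simp add: v0_def)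
    finally show ?case .
  qed
  have "integral\<^sup>N M Z = (\<Sum>v\<in>PiE {..<n} (\<lambda>_. Bs). ennreal (H v) * emeasure M (Ev n v))"
    unfolding Z_def by (subst nn_integral_sum[OF mz]) (intro sum.cong refl nn_integral_cmult_indicator Ev_sets)
  also have "\<dots> = (\<Sum>v\<in>PiE {..<n} (\<lambda>_. Bs). ennreal (H v * (1 / real (card Bs)) ^ n))"
    by (intro sum.cong refl) (simp add: emeasure_Ev ennreal_mult Hpos)
  also have "\<dots> = ennreal (\<Sum>v\<in>PiE {..<n} (\<lambda>_. Bs). H v * (1 / real (card Bs)) ^ n)"
    by (rule sum_ennreal) (simp add: Hpos)
  also have "\<dots> = ennreal ((\<Sum>v\<in>PiE {..<n} (\<lambda>_. Bs). H v) * (1 / real (card Bs)) ^ n)"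
    by (simp add: sum_distrib_right)
  finally show "integral\<^sup>N M Z = ennreal ((\<Sum>v\<in>PiE {..<n} (\<lambda>_. Bs). H v) * (1 / real (card Bs)) ^ n)" .
qed

lemma AE_summable:
  fixes H :: "nat \<Rightarrow> (nat \<Rightarrow> nat set) \<Rightarrow> real"
  assumes Hpos: "\<And>n v. H n v \<ge> 0"
    and Hcong: "\<And>n v w. (\<And>i. i < n \<Longrightarrow> v i = w i) \<Longrightarrow> H n v = H n w"
    and sm: "summable (\<lambda>n. (\<Sum>v\<in>PiE {..<n} (\<lambda>_. Bs). H n v) * (1 / real (card Bs)) ^ n)"
  shows "AE \<omega> in M. summable (\<lambda>n. H n (\<lambda>i. B i \<omega>))"
proof -
  define e where "e n = (\<Sum>v\<in>PiE {..<n} (\<lambda>_. Bs). H n v) * (1 / real (card Bs)) ^ n" for n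
  have "\<forall>n. \<exists>Z. Z \<in> borel_measurable M \<and> (AE \<omega> in M. Z \<omega> = ennreal (H n (\<lambda>i. B i \<omega>)))
      \<and> integral\<^sup>N M Z = ennreal (e n)"
    unfolding e_def using expect[of "H n" n for n] Hpos Hcong by blast
  then obtain Z where Z: "\<And>n. Z n \<in> borel_measurable M"
    "\<And>n. AE \<omega> in M. Z n \<omega> = ennreal (H n (\<lambda>i. B i \<omega>))"
    "\<And>n. integral\<^sup>N M (Z n) = ennreal (e n)"
    by metis
  have epos: "e n \<ge> 0" for n unfolding e_def by (intro mult_nonneg_nonneg sum_nonneg Hpos) auto
  have meas: "(\<lambda>\<omega>. \<Sum>n. Z n \<omega>) \<in> borel_measurable M" using Z(1) by measurable
  have "(\<integral>\<^sup>+ \<omega>. (\<Sum>n. Z n \<omega>) \<partial>M) = (\<Sum>n. ennreal (e n))"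
    by (subst nn_integral_suminf[OF Z(1)]) (simp add: Z(3))
  also have "\<dots> = ennreal (\<Sum>n. e n)" using epos sm unfolding e_def[symmetric] by (rule suminf_ennreal2)
  finally have "(\<integral>\<^sup>+ \<omega>. (\<Sum>n. Z n \<omega>) \<partial>M) \<noteq> \<infinity>" by simp
  from nn_integral_noteq_infinite[OF meas this]
  have A1: "AE \<omega> in M. (\<Sum>n. Z n \<omega>) \<noteq> \<infinity>" .
  have A2: "AE \<omega> in M. \<forall>n. Z n \<omega> = ennreal (H n (\<lambda>i. B i \<omega>))"
    using Z(2) by (simp add: AE_all_countable)
  from A1 A2 show ?thesis
  proof eventually_elim
    case (elim \<omega>)
    then have "(\<Sum>n. ennreal (H n (\<lambda>i. B i \<omega>))) \<noteq> top" by simp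
    then show ?case by (rule summable_suminf_not_top[rotated]) (rule Hpos)
  qed
qed

end

definition Xd :: "(nat \<Rightarrow> 'v::euclidean_space \<Rightarrow> 'v) \<Rightarrow> nat \<Rightarrow> real \<Rightarrow> 'v \<Rightarrow> (nat \<Rightarrow> nat set) \<Rightarrow> nat \<Rightarrow> 'v" where
  "Xd g K s x0 v n = sgd g K s x0 (\<lambda>i (_::unit). v i) n ()"

lemma Xd_0[simp]: "Xd g K s x0 v 0 = x0" unfolding Xd_def by simp

lemma Xd_Suc: "Xd g K s x0 v (Suc n) = Xd g K s x0 v n - s *\<^sub>R batch_grad g K (v n) (Xd g K s x0 v n)"
  unfolding Xd_def by simp

lemma sgd_Xd: "sgd g K s x0 B n \<omega> = Xd g K s x0 (\<lambda>i. B i \<omega>) n"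
  by (induction n) (simp_all add: Xd_Suc)

lemma Xd_cong: "(\<And>i. i < n \<Longrightarrow> v i = w i) \<Longrightarrow> Xd g K s x0 v n = Xd g K s x0 w n"
proof (induction n)
  case 0 then show ?case by simp
next
  case (Suc n)
  then have "Xd g K s x0 v n = Xd g K s x0 w n" by simp
  moreover have "v n = w n" using Suc by simp
  ultimately show ?case by (simp add: Xd_Suc)
qed

lemma Xd_upd: "Xd g K s x0 (v(n := c)) (Suc n) = Xd g K s x0 v n - s *\<^sub>R batch_grad g K c (Xd g K s x0 v n)"
proof -
  have "Xd g K s x0 (v(n := c)) n = Xd g K s x0 v n" by (rule Xd_cong) simp
  then show ?thesis by (simp add: Xd_Suc)
qed

context sgd_setting
begin

definition Dn :: "real \<Rightarrow> 'v \<Rightarrow> nat \<Rightarrow> real" where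
  "Dn s x0 n = (\<Sum>v\<in>PiE {..<n} (\<lambda>_. Bs). (norm (Xd g K s x0 v n - xs))\<^sup>2)"

definition Pn :: "real \<Rightarrow> 'v \<Rightarrow> nat \<Rightarrow> real" where
  "Pn s x0 n = (\<Sum>v\<in>PiE {..<n} (\<lambda>_. Bs). F (Xd g K s x0 v n) - F xs)"

lemma Dn_0: "Dn s x0 0 = (norm (x0 - xs))\<^sup>2" unfolding Dn_def by simp

lemma Dn_Suc: "Dn s x0 (Suc n) = (\<Sum>v\<in>PiE {..<n} (\<lambda>_. Bs). \<Sum>c\<in>Bs.
    (norm (Xd g K s x0 v n - s *\<^sub>R bg c (Xd g K s x0 v n) - xs))\<^sup>2)"
  unfolding Dn_def by (subst sum_PiE_Suc[OF batches_finite]) (simp add: Xd_upd)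

lemma Dn_nonneg: "Dn s x0 n \<ge> 0" unfolding Dn_def by (intro sum_nonneg) auto

lemma Dn_strong:
  assumes sc: "strongly_convex F \<mu>" and LL: "LL > 0"
  shows "Dn (1 / LL) x0 n \<le> (real m * (1 - \<mu> / LL)) ^ n * (norm (x0 - xs))\<^sup>2"
proof (induction n)
  case 0 then show ?case by (simp add: Dn_0)
next
  case (Suc n)
  have q: "0 \<le> 1 - \<mu> / LL" using mu_le[OF sc LL] LL by (simp add: field_simps)
  have "Dn (1 / LL) x0 (Suc n) \<le> (\<Sum>v\<in>PiE {..<n} (\<lambda>_. Bs). real m * (1 - \<mu> / LL) * (norm (Xd g K (1 / LL) x0 v n - xs))\<^sup>2)"
    unfolding Dn_Suc
  proof (rule sum_mono)
    fix v
    let ?x = "Xd g K (1 / LL) x0 v n"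
    have "(1 / real m) * (\<Sum>c\<in>Bs. (norm (?x - (1 / LL) *\<^sub>R bg c ?x - xs))\<^sup>2) \<le> (1 - \<mu> / LL) * (norm (?x - xs))\<^sup>2"
      by (rule step_strong[OF sc LL])
    then show "(\<Sum>c\<in>Bs. (norm (?x - (1 / LL) *\<^sub>R bg c ?x - xs))\<^sup>2) \<le> real m * (1 - \<mu> / LL) * (norm (?x - xs))\<^sup>2"
      using m_pos by (simp add: field_simps)
  qed
  also have "\<dots> = real m * (1 - \<mu> / LL) * Dn (1 / LL) x0 n" unfolding Dn_def by (simp add: sum_distrib_left)
  also have "\<dots> \<le> real m * (1 - \<mu> / LL) * ((real m * (1 - \<mu> / LL)) ^ n * (norm (x0 - xs))\<^sup>2)"
    using Suc q by (intro mult_left_mono) auto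
  finally show ?case by simp
qed

lemma Dn_convex:
  assumes cv: "convex_on UNIV F" and LL: "LL > 0"
  shows "Dn (1 / (2 * LL)) x0 (Suc n) \<le> real m * Dn (1 / (2 * LL)) x0 n - real m / (2 * LL) * Pn (1 / (2 * LL)) x0 n"
proof -
  let ?s = "1 / (2 * LL)"
  have "Dn ?s x0 (Suc n) \<le> (\<Sum>v\<in>PiE {..<n} (\<lambda>_. Bs). real m * ((norm (Xd g K ?s x0 v n - xs))\<^sup>2 - ?s * (F (Xd g K ?s x0 v n) - F xs)))"
    unfolding Dn_Suc
  proof (rule sum_mono)
    fix v
    let ?x = "Xd g K ?s x0 v n"
    have "(1 / real m) * (\<Sum>c\<in>Bs. (norm (?x - ?s *\<^sub>R bg c ?x - xs))\<^sup>2) \<le> (norm (?x - xs))\<^sup>2 - ?s * (F ?x - F xs)"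
      by (rule step_convex[OF cv LL])
    then show "(\<Sum>c\<in>Bs. (norm (?x - ?s *\<^sub>R bg c ?x - xs))\<^sup>2) \<le> real m * ((norm (?x - xs))\<^sup>2 - ?s * (F ?x - F xs))"
      using m_pos by (simp add: field_simps)
  qed
  also have "\<dots> = real m * Dn ?s x0 n - real m / (2 * LL) * Pn ?s x0 n"
    unfolding Dn_def Pn_def by (simp add: sum_distrib_left sum_subtractf right_diff_distrib)
  finally show ?thesis .
qed

lemma Pn_bound:
  assumes cv: "convex_on UNIV F" and LL: "LL > 0"
  shows "(\<Sum>n<T. Pn (1 / (2 * LL)) x0 n * (1 / real m) ^ n) \<le> 2 * LL * (norm (x0 - xs))\<^sup>2"
proof -
  let ?s = "1 / (2 * LL)"
  define a where "a n = Dn ?s x0 n * (1 / real m) ^ n" for n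
  have rm: "real m > 0" using m_pos by simp
  have step: "a (Suc n) \<le> a n - (1 / (2 * LL)) * (Pn ?s x0 n * (1 / real m) ^ n)" for n
  proof -
    have "a (Suc n) = (1 / real m) ^ n * ((1 / real m) * Dn ?s x0 (Suc n))" unfolding a_def by simp
    also have "\<dots> \<le> (1 / real m) ^ n * ((1 / real m) * (real m * Dn ?s x0 n - real m / (2 * LL) * Pn ?s x0 n))"
      using Dn_convex[OF cv LL, of x0 n] rm by (intro mult_left_mono) auto
    also have "\<dots> = a n - (1 / (2 * LL)) * (Pn ?s x0 n * (1 / real m) ^ n)"
      unfolding a_def using rm by (simp add: field_simps)
    finally show ?thesis .
  qed
  have "a T + (1 / (2 * LL)) * (\<Sum>n<T. Pn ?s x0 n * (1 / real m) ^ n) \<le> a 0" for T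
  proof (induction T)
    case 0 then show ?case by simp
  next
    case (Suc T) then show ?case using step[of T] by (simp add: algebra_simps)
  qed
  moreover have "a T \<ge> 0" unfolding a_def using Dn_nonneg by simp
  ultimately have "(1 / (2 * LL)) * (\<Sum>n<T. Pn ?s x0 n * (1 / real m) ^ n) \<le> a 0"
    by (smt (verit))
  then show ?thesis using LL unfolding a_def by (simp add: Dn_0 field_simps)
qed

end

lemma little_o_geo:
  fixes u Y :: "nat \<Rightarrow> real" and r C :: real
  assumes r: "r > 0" and C: "C \<ge> 0" and u0: "\<And>n. 0 \<le> u n" and uY: "\<And>n. u n \<le> C * Y n"
    and sm: "summable (\<lambda>n. Y n / r ^ n)"
  shows "little_o_seq u (\<lambda>n. r ^ n)"
  unfolding little_o_seq_def
proof (intro allI impI)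
  fix \<epsilon> :: real assume e: "\<epsilon> > 0"
  have lim: "(\<lambda>n. Y n / r ^ n) \<longlonglongrightarrow> 0" by (rule summable_LIMSEQ_zero[OF sm])
  have "\<epsilon> / (C + 1) > 0" using e C by simp
  then have ev: "\<forall>\<^sub>F n in sequentially. Y n / r ^ n < \<epsilon> / (C + 1)"
    using order_tendstoD(2)[OF lim] by blast
  then show "\<forall>\<^sub>F n in sequentially. \<bar>u n\<bar> \<le> \<epsilon> * r ^ n"
  proof eventually_elim
    case (elim n)
    have rn: "r ^ n > 0" using r by simp
    then have "Y n < \<epsilon> / (C + 1) * r ^ n" using elim by (simp add: pos_divide_less_eq)
    then have "C * Y n \<le> C * (\<epsilon> / (C + 1) * r ^ n)" using C by (intro mult_left_mono) auto
    also have "\<dots> \<le> \<epsilon> * r ^ n"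
    proof -
      have "C / (C + 1) \<le> 1" using C by simp
      then have "C / (C + 1) * (\<epsilon> * r ^ n) \<le> 1 * (\<epsilon> * r ^ n)" using e rn by (intro mult_right_mono) auto
      then show ?thesis by simp
    qed
    finally show ?case using u0[of n] uY[of n] by simp
  qed
qed

lemma avg_seq_id:
  fixes x :: "nat \<Rightarrow> 'v::real_vector"
  shows "(real n * (real n - 1)) *\<^sub>R avg_seq x n = (\<Sum>k<n. (2 * real k) *\<^sub>R x k)"
proof (induction n)
  case 0 then show ?case by simp
next
  case (Suc n)
  have "(real (Suc n) * (real (Suc n) - 1)) *\<^sub>R avg_seq x (Suc n)
      = ((real n + 1) * real n) *\<^sub>R ((2 / (real n + 1)) *\<^sub>R x n + ((real n - 1) / (real n + 1)) *\<^sub>R avg_seq x n)"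
    by simp
  also have "\<dots> = (2 * real n) *\<^sub>R x n + (real n * (real n - 1)) *\<^sub>R avg_seq x n"
  proof -
    have a: "((real n + 1) * real n) * (2 / (real n + 1)) = 2 * real n" by (simp add: field_simps)
    have b: "((real n + 1) * real n) * ((real n - 1) / (real n + 1)) = real n * (real n - 1)" by (simp add: field_simps)
    show ?thesis by (simp only: scaleR_add_right scaleR_scaleR a b)
  qed
  also have "\<dots> = (\<Sum>k<Suc n. (2 * real k) *\<^sub>R x k)" using Suc by simp
  finally show ?case .
qed

lemma sum_2k: "(\<Sum>k<n. 2 * real k) = real n * (real n - 1)"
  by (induction n) (simp_all add: algebra_simps)

lemma avg_convex_bound:
  fixes x :: "nat \<Rightarrow> 'v::real_vector" and F :: "'v \<Rightarrow> real"
  assumes cv: "convex_on UNIV F" and n: "n \<ge> 2"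
  shows "F (avg_seq x n) - c \<le> (2 / (real n * (real n - 1))) * (\<Sum>k<n. real k * (F (x k) - c))"
proof -
  define w where "w k = 2 * real k / (real n * (real n - 1))" for k
  have pos: "real n * (real n - 1) > 0" using n by simp
  have avg: "avg_seq x n = (\<Sum>k<n. w k *\<^sub>R x k)"
  proof -
    have "(1 / (real n * (real n - 1))) *\<^sub>R ((real n * (real n - 1)) *\<^sub>R avg_seq x n)
        = ((1 / (real n * (real n - 1))) * (real n * (real n - 1))) *\<^sub>R avg_seq x n"
      by (rule scaleR_scaleR)
    also have "(1 / (real n * (real n - 1))) * (real n * (real n - 1)) = 1" using n pos by simp
    finally have "avg_seq x n = (1 / (real n * (real n - 1))) *\<^sub>R ((real n * (real n - 1)) *\<^sub>R avg_seq x n)"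
      by simp
    also have "\<dots> = (\<Sum>k<n. w k *\<^sub>R x k)"
      unfolding avg_seq_id w_def by (simp add: scaleR_sum_right)
    finally show ?thesis .
  qed
  have w1: "(\<Sum>k<n. w k) = 1"
    unfolding w_def using n pos by (simp add: sum_divide_distrib[symmetric] sum_2k)
  have "F (avg_seq x n) \<le> (\<Sum>k<n. w k * F (x k))"
    unfolding avg using n w1 by (intro convex_on_sum[OF _ _ cv]) (auto simp: w_def)
  moreover have "(\<Sum>k<n. w k * F (x k)) - c = (\<Sum>k<n. w k * (F (x k) - c))"
    using w1 by (simp add: right_diff_distrib sum_subtractf sum_distrib_right[symmetric])
  moreover have "(\<Sum>k<n. w k * (F (x k) - c)) = (2 / (real n * (real n - 1))) * (\<Sum>k<n. real k * (F (x k) - c))"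
    unfolding w_def by (simp add: sum_distrib_left mult.assoc)
  ultimately show ?thesis by linarith
qed

lemma kron_bound:
  fixes a :: "nat \<Rightarrow> real"
  assumes a0: "\<And>k. a k \<ge> 0" and sm: "summable a" and e: "\<epsilon> > 0"
  shows "\<forall>\<^sub>F n in sequentially. (2 / (real n - 1)) * (\<Sum>k<n. real k * a k) \<le> \<epsilon>"
proof -
  define \<delta> where "\<delta> = \<epsilon> / 8"
  have d: "\<delta> > 0" using e unfolding \<delta>_def by simp
  obtain M where M: "\<And>m n. m \<ge> M \<Longrightarrow> norm (sum a {m..<n}) < \<delta>"
    using sm d unfolding summable_Cauchy by blast
  define CM where "CM = (\<Sum>k<M. real k * a k)"
  have CM0: "CM \<ge> 0" unfolding CM_def using a0 by (intro sum_nonneg) auto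
  have "\<forall>\<^sub>F n in sequentially. real n \<ge> max 2 (max (real M) (1 + 4 * CM / \<epsilon>))"
    using eventually_ge_at_top[of "nat \<lceil>max 2 (max (real M) (1 + 4 * CM / \<epsilon>))\<rceil>"]
    by eventually_elim linarith
  then show ?thesis
  proof eventually_elim
    case (elim n)
    then have n2: "real n \<ge> 2" and nM: "M \<le> n" and nC: "real n \<ge> 1 + 4 * CM / \<epsilon>" by auto
    have split: "(\<Sum>k<n. real k * a k) = CM + (\<Sum>k\<in>{M..<n}. real k * a k)"
      unfolding CM_def using nM by (metis sum.atLeastLessThan_concat lessThan_atLeast0 le0)
    have "(\<Sum>k\<in>{M..<n}. real k * a k) \<le> (\<Sum>k\<in>{M..<n}. real n * a k)"
      using a0 by (intro sum_mono mult_right_mono) auto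
    also have "\<dots> = real n * sum a {M..<n}" by (simp add: sum_distrib_left)
    also have "\<dots> \<le> real n * \<delta>"
    proof -
      have "sum a {M..<n} \<ge> 0" using a0 by (intro sum_nonneg) auto
      then have "sum a {M..<n} < \<delta>" using M[of M n] by simp
      then show ?thesis by (intro mult_left_mono) auto
    qed
    finally have S: "(\<Sum>k<n. real k * a k) \<le> CM + real n * \<delta>" using split by simp
    have p: "real n - 1 > 0" using n2 by simp
    have "(2 / (real n - 1)) * (\<Sum>k<n. real k * a k) \<le> (2 / (real n - 1)) * (CM + real n * \<delta>)"
      using S p by (intro mult_left_mono) auto
    also have "\<dots> = 2 * CM / (real n - 1) + 2 * real n / (real n - 1) * \<delta>" by (simp add: distrib_left)
    also have "2 * CM / (real n - 1) \<le> \<epsilon> / 2"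
    proof -
      have "4 * CM / \<epsilon> \<le> real n - 1" using nC by simp
      then have "4 * CM \<le> (real n - 1) * \<epsilon>" using e by (simp add: pos_divide_le_eq mult.commute)
      then have "4 * CM \<le> \<epsilon> * (real n - 1)" by (simp only: mult.commute)
      then show ?thesis using p by (simp add: pos_divide_le_eq)
    qed
    also have "2 * real n / (real n - 1) * \<delta> \<le> 4 * \<delta>"
    proof -
      have "2 * real n / (real n - 1) \<le> 4" using p n2 by (simp add: pos_divide_le_eq)
      then show ?thesis using d by (intro mult_right_mono) auto
    qed
    finally show ?case unfolding \<delta>_def by simp
  qed
qed

lemma avg_little_o:
  fixes x :: "nat \<Rightarrow> 'v::real_vector" and F :: "'v \<Rightarrow> real"
  assumes cv: "convex_on UNIV F" and Fmin: "\<And>y. F xs \<le> F y"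
    and sm: "summable (\<lambda>n. F (x n) - F xs)"
  shows "little_o_seq (\<lambda>n. F (avg_seq x n) - F xs) (\<lambda>n. 1 / real n)"
  unfolding little_o_seq_def
proof (intro allI impI)
  fix \<epsilon> :: real assume e: "\<epsilon> > 0"
  have a0: "\<And>k. F (x k) - F xs \<ge> 0" using Fmin by simp
  from kron_bound[OF a0 sm e]
  have "\<forall>\<^sub>F n in sequentially. (2 / (real n - 1)) * (\<Sum>k<n. real k * (F (x k) - F xs)) \<le> \<epsilon>" .
  moreover have "\<forall>\<^sub>F n in sequentially. n \<ge> 2" by (rule eventually_ge_at_top)
  ultimately show "\<forall>\<^sub>F n in sequentially. \<bar>F (avg_seq x n) - F xs\<bar> \<le> \<epsilon> * (1 / real n)"
  proof eventually_elim
    case (elim n)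
    have pos: "real n > 0" using elim by simp
    have "F (avg_seq x n) - F xs \<le> (2 / (real n * (real n - 1))) * (\<Sum>k<n. real k * (F (x k) - F xs))"
      by (rule avg_convex_bound[OF cv elim(2)])
    also have "\<dots> = (1 / real n) * ((2 / (real n - 1)) * (\<Sum>k<n. real k * (F (x k) - F xs)))"
      by simp
    also have "\<dots> \<le> (1 / real n) * \<epsilon>" using elim pos by (intro mult_left_mono) auto
    finally show ?case using Fmin[of "avg_seq x n"] by simp
  qed
qed

theorem theorem2:
  fixes M :: "'w measure"
    and f :: "nat \<Rightarrow> 'v::euclidean_space \<Rightarrow> real"
    and g :: "nat \<Rightarrow> 'v \<Rightarrow> 'v"
    and L :: "nat \<Rightarrow> real"
    and N K :: nat
    and x0 xs :: 'v
    and B :: "nat \<Rightarrow> 'w \<Rightarrow> nat set"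
  defines "F \<equiv> (\<lambda>x. (1 / real N) * (\<Sum>i=1..N. f i x))"
  assumes N2: "N \<ge> 2"
    and K: "1 \<le> K" "K \<le> N"
    and grad: "\<And>i x. i \<in> {1..N} \<Longrightarrow> (f i has_derivative (\<lambda>h. g i x \<bullet> h)) (at x)"
    and grad_cont: "\<And>i. i \<in> {1..N} \<Longrightarrow> continuous_on UNIV (g i)"
    and L_nonneg: "\<And>i. i \<in> {1..N} \<Longrightarrow> L i \<ge> 0"
    and lipschitz: "\<And>i x y. i \<in> {1..N} \<Longrightarrow> norm (g i x - g i y) \<le> L i * norm (x - y)"
    and xs_min: "\<And>y. F xs \<le> F y"
    and interp: "\<And>i y. i \<in> {1..N} \<Longrightarrow> f i xs \<le> f i y"
    and P: "prob_space M"
    and B_indep: "prob_space.indep_vars M (\<lambda>_. count_space UNIV) B UNIV"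
    and B_unif: "\<And>n. distr M (count_space UNIV) (B n) = measure_pmf (pmf_of_set (batches N K))"
  shows
    "(convex_on UNIV F \<longrightarrow>
        (AE \<omega> in M. little_o_seq
            (\<lambda>n. F (avg_seq (\<lambda>m. sgd g K (1 / (2 * LK L N K)) x0 B m \<omega>) n) - F xs)
            (\<lambda>n. 1 / real n)))
   \<and> (\<forall>\<mu>>0. strongly_convex F \<mu> \<longrightarrow>
        (\<forall>\<epsilon>'>0. AE \<omega> in M. little_o_seq
            (\<lambda>n. F (sgd g K (1 / LK L N K) x0 B n \<omega>) - F xs)
            (\<lambda>n. (1 - \<mu> / LK L N K + \<epsilon>') ^ n)))"
proof -
  interpret S: sgd_setting f g L N K xs F
    by unfold_locales (use K grad L_nonneg lipschitz interp in \<open>auto simp: F_def\<close>)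
  interpret P: sgd_prob M B "batches N K"
    by (rule sgd_prob.intro[OF P]) (unfold_locales, use batches_finite batches_nonempty[OF K(2)] B_indep B_unif in auto)
  have LLnn: "LK L N K \<ge> 0" by (rule S.LL_nonneg)
  have part1: "convex_on UNIV F \<longrightarrow>
        (AE \<omega> in M. little_o_seq
            (\<lambda>n. F (avg_seq (\<lambda>m. sgd g K (1 / (2 * LK L N K)) x0 B m \<omega>) n) - F xs)
            (\<lambda>n. 1 / real n))"
  proof
    assume cv: "convex_on UNIV F"
    show "AE \<omega> in M. little_o_seq
            (\<lambda>n. F (avg_seq (\<lambda>m. sgd g K (1 / (2 * LK L N K)) x0 B m \<omega>) n) - F xs)
            (\<lambda>n. 1 / real n)"
    proof (cases "LK L N K = 0")
      case True
      then have z: "F y - F xs = 0" for y using S.LL0 by simp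
      show ?thesis unfolding little_o_seq_def
      proof (intro AE_I2 allI impI always_eventually)
        fix \<omega> and \<epsilon> :: real and n assume "\<epsilon> > 0"
        then show "\<bar>F (avg_seq (\<lambda>m. sgd g K (1 / (2 * LK L N K)) x0 B m \<omega>) n) - F xs\<bar> \<le> \<epsilon> * (1 / real n)"
          by (simp add: z)
      qed
    next
      case False
      then have LL: "LK L N K > 0" using LLnn by simp
      define s where "s = 1 / (2 * LK L N K)"
      define H where "H n v = F (Xd g K s x0 v n) - F xs" for n v
      have Hpos: "H n v \<ge> 0" for n v unfolding H_def using S.F_min by simp
      have Hcong: "H n v = H n w" if "\<And>i. i < n \<Longrightarrow> v i = w i" for n v w
      proof -
        have "Xd g K s x0 v n = Xd g K s x0 w n" by (rule Xd_cong) (rule that)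
        then show ?thesis unfolding H_def by simp
      qed
      have sm: "summable (\<lambda>n. (\<Sum>v\<in>PiE {..<n} (\<lambda>_. batches N K). H n v) * (1 / real (card (batches N K))) ^ n)"
      proof (rule summableI_nonneg_bounded)
        show "0 \<le> (\<Sum>v\<in>PiE {..<n} (\<lambda>_. batches N K). H n v) * (1 / real (card (batches N K))) ^ n" for n
          using Hpos by (intro mult_nonneg_nonneg sum_nonneg) auto
        show "(\<Sum>i<n. (\<Sum>v\<in>PiE {..<i} (\<lambda>_. batches N K). H i v) * (1 / real (card (batches N K))) ^ i)
            \<le> 2 * LK L N K * (norm (x0 - xs))\<^sup>2" for n
          using S.Pn_bound[OF cv LL, of x0 n] unfolding H_def S.Pn_def s_def .
      qed
      have "AE \<omega> in M. summable (\<lambda>n. H n (\<lambda>i. B i \<omega>))"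
        by (rule P.AE_summable[OF Hpos Hcong sm])
      then show ?thesis
      proof eventually_elim
        case (elim \<omega>)
        have "summable (\<lambda>n. F (sgd g K s x0 B n \<omega>) - F xs)"
          using elim unfolding H_def sgd_Xd .
        from avg_little_o[OF cv S.F_min this] show ?case unfolding s_def .
      qed
    qed
  qed
  have part2: "\<forall>\<mu>>0. strongly_convex F \<mu> \<longrightarrow>
        (\<forall>\<epsilon>'>0. AE \<omega> in M. little_o_seq
            (\<lambda>n. F (sgd g K (1 / LK L N K) x0 B n \<omega>) - F xs)
            (\<lambda>n. (1 - \<mu> / LK L N K + \<epsilon>') ^ n))"
  proof (intro allI impI)
    fix \<mu> \<epsilon>' :: real assume mu: "\<mu> > 0" and sc: "strongly_convex F \<mu>" and ep: "\<epsilon>' > 0"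
    show "AE \<omega> in M. little_o_seq
            (\<lambda>n. F (sgd g K (1 / LK L N K) x0 B n \<omega>) - F xs)
            (\<lambda>n. (1 - \<mu> / LK L N K + \<epsilon>') ^ n)"
    proof (cases "LK L N K = 0")
      case True
      then have z: "F y - F xs = 0" for y using S.LL0 by simp
      have p: "(1 - \<mu> / LK L N K + \<epsilon>') ^ n \<ge> 0" for n using True ep by simp
      show ?thesis unfolding little_o_seq_def
      proof (intro AE_I2 allI impI always_eventually)
        fix \<omega> and \<epsilon> :: real and n assume "\<epsilon> > 0"
        then show "\<bar>F (sgd g K (1 / LK L N K) x0 B n \<omega>) - F xs\<bar> \<le> \<epsilon> * (1 - \<mu> / LK L N K + \<epsilon>') ^ n"
          using p[of n] by (simp add: z)
      qed
    next
      case False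
      then have LL: "LK L N K > 0" using LLnn by simp
      define s where "s = 1 / LK L N K"
      define q where "q = 1 - \<mu> / LK L N K"
      define r where "r = q + \<epsilon>'"
      have q0: "q \<ge> 0" unfolding q_def using S.mu_le[OF sc LL] LL by (simp add: field_simps)
      have r0: "r > 0" unfolding r_def using q0 ep by simp
      have qr: "q / r < 1" "q / r \<ge> 0" using q0 ep r0 unfolding r_def by (simp_all add: field_simps)
      define H where "H n v = (norm (Xd g K s x0 v n - xs))\<^sup>2 / r ^ n" for n v
      have Hpos: "H n v \<ge> 0" for n v unfolding H_def using r0 by simp
      have Hcong: "H n v = H n w" if "\<And>i. i < n \<Longrightarrow> v i = w i" for n v w
      proof -
        have "Xd g K s x0 v n = Xd g K s x0 w n" by (rule Xd_cong) (rule that)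
        then show ?thesis unfolding H_def by simp
      qed
      define m where "m = real (card (batches N K))"
      have m0: "m > 0" unfolding m_def using S.m_pos by simp
      have bound: "(\<Sum>v\<in>PiE {..<n} (\<lambda>_. batches N K). H n v) * (1 / m) ^ n \<le> (norm (x0 - xs))\<^sup>2 * (q / r) ^ n" for n
      proof -
        have "(\<Sum>v\<in>PiE {..<n} (\<lambda>_. batches N K). H n v) = S.Dn s x0 n / r ^ n"
          unfolding H_def S.Dn_def by (simp add: sum_divide_distrib)
        also have "\<dots> \<le> (m * q) ^ n * (norm (x0 - xs))\<^sup>2 / r ^ n"
          using S.Dn_strong[OF sc LL, of x0 n] r0 unfolding s_def q_def m_def by (simp add: divide_right_mono)
        finally have "(\<Sum>v\<in>PiE {..<n} (\<lambda>_. batches N K). H n v) * (1 / m) ^ n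
            \<le> (m * q) ^ n * (norm (x0 - xs))\<^sup>2 / r ^ n * (1 / m) ^ n"
          using m0 by (intro mult_right_mono) auto
        also have "\<dots> = (norm (x0 - xs))\<^sup>2 * (q / r) ^ n"
          using m0 r0 by (simp add: power_mult_distrib power_divide field_simps)
        finally show ?thesis .
      qed
      have sm: "summable (\<lambda>n. (\<Sum>v\<in>PiE {..<n} (\<lambda>_. batches N K). H n v) * (1 / real (card (batches N K))) ^ n)"
      proof (rule summable_comparison_test')
        show "summable (\<lambda>n. (norm (x0 - xs))\<^sup>2 * (q / r) ^ n)"
          using qr by (intro summable_mult summable_geometric) simp
        show "norm ((\<Sum>v\<in>PiE {..<n} (\<lambda>_. batches N K). H n v) * (1 / real (card (batches N K))) ^ n)
            \<le> (norm (x0 - xs))\<^sup>2 * (q / r) ^ n" for n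
          using bound[of n] Hpos unfolding m_def
          by (subst real_norm_def, subst abs_of_nonneg) (auto intro!: mult_nonneg_nonneg sum_nonneg)
      qed
      have "AE \<omega> in M. summable (\<lambda>n. H n (\<lambda>i. B i \<omega>))"
        by (rule P.AE_summable[OF Hpos Hcong sm])
      then show ?thesis
      proof eventually_elim
        case (elim \<omega>)
        have sY: "summable (\<lambda>n. (norm (sgd g K s x0 B n \<omega> - xs))\<^sup>2 / r ^ n)"
          using elim unfolding H_def sgd_Xd .
        have "little_o_seq (\<lambda>n. F (sgd g K s x0 B n \<omega>) - F xs) (\<lambda>n. r ^ n)"
        proof (rule little_o_geo[OF r0 _ _ _ sY])
          show "0 \<le> LK L N K / 2" using LL by simp
          show "0 \<le> F (sgd g K s x0 B n \<omega>) - F xs" for n using S.F_min by simp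
          show "F (sgd g K s x0 B n \<omega>) - F xs \<le> LK L N K / 2 * (norm (sgd g K s x0 B n \<omega> - xs))\<^sup>2" for n
            by (rule S.F_upper)
        qed
        then show ?case unfolding s_def r_def q_def .
      qed
    qed
  qed
  show ?thesis using part1 part2 by blast
qed

end
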